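(* Let $h\in\mathbb R\setminus\{0\}$ and put $$\alpha:=1,\qquad \beta:=\frac{\frac h2\exp(-\frac{h^2}8)}{\sqrt{2\pi}\,(\Phi(\frac h2)-\frac12)}.$$ Then for all $x,y\in\mathbb R$ with $|x|<|y|$, $$\exp\Big(-\alpha\frac{y^2-x^2}2\Big)<\frac{\Phi(y+\frac h2)-\Phi(y-\frac h2)}{\Phi(x+\frac h2)-\Phi(x-\frac h2)}<\exp\Big(-\beta\frac{y^2-x^2}2\Big).$$ These constants are optimal: if $\alpha$ is replaced by any smaller constant, the left inequality fails for some $x,y$ with $|x|<|y|$, and if $\beta$ is replaced by any larger constant, the right inequality fails for some such $x,y$. Moreover, $$\beta>\exp\Big(-\frac{h^2}{12}-\frac{h^4}{1440}\Big)>1-\frac{h^2}{12}.$$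
   Context: $\Phi$ is the standard normal distribution function. *)

theory Defs
  imports "HOL-Probability.Probability"
begin

definition Phi :: "real \<Rightarrow> real" where
  "Phi x = (\<integral>t\<in>{..x}. std_normal_density t \<partial>lborel)"

end

theory Submission
  imports Defs
begin


lemma phi_int: "integrable lborel std_normal_density"
  using integrable_std_normal_moment[of 0] by simp

lemma phi_setint: "set_integrable lborel A std_normal_density"
  if "A \<in> sets borel" for A
  unfolding set_integrable_def using phi_int that by (intro integrable_mult_indicator) auto

lemma phi_meas: "set_borel_measurable lborel A std_normal_density" if "A \<in> sets borel" for A
  unfolding set_borel_measurable_def using that by measurable

lemma Phi_LBINT: "Phi x = (LBINT t=-\<infinity>..ereal x. std_normal_density t)"
proof -
  have "(LBINT t=-\<infinity>..ereal x. std_normal_density t) = (LBINT t:{..<x}. std_normal_density t)"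
    by (simp add: interval_lebesgue_integral_def)
  also have "\<dots> = (LBINT t:{..x}. std_normal_density t)"
    by (rule set_integral_cong_set) (auto intro!: phi_meas eventually_mono[OF AE_lborel_singleton[of x]])
  finally show ?thesis by (simp add: Phi_def)
qed

lemma Phi_split: "Phi x = Phi 0 + (LBINT t=0..x. std_normal_density t)"
proof -
  have "(LBINT t=-\<infinity>..ereal 0. std_normal_density t) + (LBINT t=ereal 0..ereal x. std_normal_density t)
      = (LBINT t=-\<infinity>..ereal x. std_normal_density t)"
    by (rule interval_integral_sum) (auto simp: interval_lebesgue_integrable_def einterval_def intro!: phi_setint)
  then show ?thesis by (simp add: Phi_LBINT zero_ereal_def)
qed

lemma Phi_deriv: "(Phi has_real_derivative std_normal_density x) (at x)"
proof -
  have c: "continuous_on {min 0 x - 1..max 0 x + 1} std_normal_density"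
    unfolding std_normal_density_def by (intro continuous_intros) auto
  have "((\<lambda>u. LBINT y=0..u. std_normal_density y) has_vector_derivative std_normal_density x)
      (at x within {min 0 x - 1..max 0 x + 1})"
    using interval_integral_FTC2[OF _ _ c, of 0 x] by (simp add: zero_ereal_def)
  then have "((\<lambda>u. LBINT y=0..u. std_normal_density y) has_vector_derivative std_normal_density x) (at x)"
    by (subst (asm) at_within_Icc_at) auto
  then have "((\<lambda>u. Phi 0 + (LBINT y=0..u. std_normal_density y)) has_real_derivative std_normal_density x) (at x)"
    by (auto simp: has_real_derivative_iff_has_vector_derivative intro!: derivative_eq_intros)
  then show ?thesis by (subst (asm) Phi_split[symmetric])
qed

lemma Phi_half: "Phi 0 = 1/2"
proof -
  have tot: "(LBINT t=-\<infinity>..\<infinity>. std_normal_density t) = 1"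
    using integral_std_normal_moment_even[of 0]
    by (simp add: interval_lebesgue_integral_def set_lebesgue_integral_def)
  have "(LBINT t=-\<infinity>..ereal 0. std_normal_density t) + (LBINT t=ereal 0..\<infinity>. std_normal_density t)
      = (LBINT t=-\<infinity>..\<infinity>. std_normal_density t)"
    by (rule interval_integral_sum) (auto simp: interval_lebesgue_integrable_def einterval_def intro!: phi_setint)
  moreover have "(LBINT t=ereal 0..\<infinity>. std_normal_density t) = (LBINT t=-\<infinity>..ereal 0. std_normal_density t)"
  proof -
    have e: "\<And>t. std_normal_density (-t) = std_normal_density t" by (simp add: std_normal_density_def)
    show ?thesis by (subst interval_integral_reflect) (simp add: e)
  qed
  ultimately show ?thesis using tot Phi_LBINT[of 0] by simp
qed




abbreviation "\<phi> \<equiv> std_normal_density"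

lemma phi_eq: "\<phi> t = exp (-(t^2)/2) / sqrt (2*pi)"
  by (simp add: std_normal_density_def)

lemma phi_pos: "\<phi> t > 0" by (simp add: phi_eq)

lemma phi_deriv: "(\<phi> has_real_derivative (- t * \<phi> t)) (at t)"
proof -
  have "((\<lambda>t. exp (-(t^2)/2) / sqrt (2*pi)) has_real_derivative (- t * (exp (-(t^2)/2) / sqrt (2*pi)))) (at t)"
    by (auto intro!: derivative_eq_intros simp: field_simps)
  then show ?thesis by (simp add: phi_eq[abs_def] phi_eq)
qed

lemma Phi_chain [derivative_intros]:
  "(f has_real_derivative f') (at x within S) \<Longrightarrow>
   ((\<lambda>t. Phi (f t)) has_real_derivative (\<phi> (f x) * f')) (at x within S)"
  by (rule DERIV_chain2[OF Phi_deriv])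

lemma phi_chain [derivative_intros]:
  "(f has_real_derivative f') (at x within S) \<Longrightarrow>
   ((\<lambda>t. \<phi> (f t)) has_real_derivative (- f x * \<phi> (f x) * f')) (at x within S)"
  using DERIV_chain2[OF phi_deriv] by simp

lemma Phi_sym: "Phi t + Phi (-t) = 1"
proof -
  have "\<forall>x. ((\<lambda>t. Phi t + Phi (-t)) has_real_derivative 0) (at x)"
  proof
    fix x
    have e: "\<phi> (-x) = \<phi> x" by (simp add: phi_eq)
    show "((\<lambda>t. Phi t + Phi (-t)) has_real_derivative 0) (at x)"
      by (rule derivative_eq_intros refl)+ (simp add: e)
  qed
  from DERIV_isconst_all[OF this, of t 0] show ?thesis by (simp add: Phi_half)
qed

lemma incr_from_deriv:
  fixes f :: "real \<Rightarrow> real"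
  assumes "a < b" "\<And>t. (f has_real_derivative f' t) (at t)" "\<And>t. a < t \<Longrightarrow> t < b \<Longrightarrow> f' t > 0"
  shows "f a < f b"
proof (rule DERIV_pos_imp_increasing_open[OF assms(1)])
  show "continuous_on {a..b} f"
    by (rule continuous_at_imp_continuous_on) (auto intro: DERIV_isCont assms(2))
qed (use assms in auto)

lemma nondecr_from_deriv:
  fixes f :: "real \<Rightarrow> real"
  assumes "a \<le> b" "\<And>t. (f has_real_derivative f' t) (at t)" "\<And>t. a < t \<Longrightarrow> t < b \<Longrightarrow> f' t \<ge> 0"
  shows "f a \<le> f b"
proof (rule DERIV_nonneg_imp_increasing_open[OF assms(1)])
  show "continuous_on {a..b} f"
    by (rule continuous_at_imp_continuous_on) (auto intro: DERIV_isCont assms(2))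
qed (use assms in auto)

lemma Phi_mono: "a < b \<Longrightarrow> Phi a < Phi b"
  by (rule incr_from_deriv[OF _ Phi_deriv]) (auto intro: phi_pos)

lemma phi_shift: "\<phi> (x + s) = \<phi> x * exp (- (x * s)) * exp (-(s^2)/2)"
proof -
  have "-((x+s)^2)/2 = -(x^2)/2 + (-(x * s)) + (-(s^2)/2)" by (simp add: power2_eq_square field_simps)
  then have "exp (-((x+s)^2)/2) = exp (-(x^2)/2) * exp (- (x * s)) * exp (-(s^2)/2)"
    by (simp add: exp_add[symmetric])
  then show ?thesis by (simp add: phi_eq)
qed

definition gg :: "real \<Rightarrow> real \<Rightarrow> real" where "gg c x = Phi (x + c) - Phi (x - c)"

lemma gg_pos: "c > 0 \<Longrightarrow> gg c x > 0" unfolding gg_def using Phi_mono[of "x-c" "x+c"] by simp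

lemma gg_even: "gg c (-x) = gg c x"
proof -
  have "-x + c = -(x-c)" "-x - c = -(x+c)" by simp_all
  then show ?thesis unfolding gg_def using Phi_sym[of "x+c"] Phi_sym[of "x-c"] by (metis diff_diff_eq2 add_diff_cancel_left' add.commute)
qed

lemma gg_deriv [derivative_intros]:
  "((gg c) has_real_derivative (\<phi> (x + c) - \<phi> (x - c))) (at x)"
  unfolding gg_def[abs_def] by (auto intro!: derivative_eq_intros)

lemma A_key:
  assumes "x > 0" "c > 0"
  shows "x * gg c x > \<phi> (x - c) - \<phi> (x + c)"
proof -
  define D where "D s = x * (Phi (x+s) - Phi (x-s)) - (\<phi> (x-s) - \<phi> (x+s))" for s
  have d: "(D has_real_derivative (s * (\<phi> (x-s) - \<phi> (x+s)))) (at s)" for s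
    unfolding D_def[abs_def] by (auto intro!: derivative_eq_intros simp: algebra_simps)
  have p: "s * (\<phi> (x-s) - \<phi> (x+s)) > 0" if "0 < s" for s
  proof -
    have "(x+s)^2 > (x-s)^2" using assms that by (simp add: power2_eq_square algebra_simps)
    then have "\<phi> (x-s) > \<phi> (x+s)" by (simp add: phi_eq divide_strict_right_mono)
    then show ?thesis using that by simp
  qed
  have "D 0 < D c" by (rule incr_from_deriv[OF assms(2) d p]) auto
  then show ?thesis by (simp add: D_def gg_def)
qed

lemma P1_mono:
  assumes "c > 0" "0 \<le> a" "a < b"
  shows "gg c a * exp (a^2/2) < gg c b * exp (b^2/2)"
proof -
  have d: "((\<lambda>t. gg c t * exp (t^2/2)) has_real_derivative
     (exp (t^2/2) * (t * gg c t - (\<phi> (t - c) - \<phi> (t + c))))) (at t)" for t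
    by (auto intro!: derivative_eq_intros simp: algebra_simps)
  show ?thesis
    by (rule incr_from_deriv[OF assms(3) d]) (use A_key assms in auto)
qed




lemma phi_sum: "\<phi> (x + s) + \<phi> (x - s) = 2 * \<phi> x * exp (-(s^2)/2) * cosh (x * s)"
  using phi_shift[of x s] phi_shift[of x "-s"] by (simp add: cosh_field_def algebra_simps)

lemma phi_diff: "\<phi> (x - s) - \<phi> (x + s) = 2 * \<phi> x * exp (-(s^2)/2) * sinh (x * s)"
  using phi_shift[of x s] phi_shift[of x "-s"] by (simp add: sinh_field_def algebra_simps)

definition WW :: "real \<Rightarrow> real" where "WW s = sqrt (2*pi) * (Phi s - 1/2)"

lemma WW_deriv: "(WW has_real_derivative exp (-(s^2)/2)) (at s)"
proof -
  have "(WW has_real_derivative sqrt (2*pi) * \<phi> s) (at s)"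
    unfolding WW_def[abs_def] by (auto intro!: derivative_eq_intros)
  then show ?thesis by (simp add: phi_eq)
qed

lemma WW0: "WW 0 = 0" by (simp add: WW_def Phi_half)

lemma exp_deriv2: "((\<lambda>s. exp (-(s^2)/2)) has_real_derivative (- s * exp (-(s^2)/2))) (at s)"
  by (auto intro!: derivative_eq_intros)

lemma F1: "s > 0 \<Longrightarrow> WW s - s * exp (-(s^2)/2) > 0"
proof -
  assume s: "s > 0"
  have d: "((\<lambda>s. WW s - s * exp (-(s^2)/2)) has_real_derivative (s^2 * exp (-(s^2)/2))) (at s)" for s
    by (auto intro!: derivative_eq_intros WW_deriv simp: power2_eq_square algebra_simps)
  from incr_from_deriv[OF s d] show ?thesis by (simp add: WW0)
qed

lemma F2: "t > 0 \<Longrightarrow> t * cosh t - sinh t > (0::real)"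
proof -
  assume s: "t > 0"
  have d: "((\<lambda>t. t * cosh t - sinh t) has_real_derivative (t * sinh t)) (at t)" for t :: real
    by (auto intro!: derivative_eq_intros)
  from incr_from_deriv[OF s d] show ?thesis by simp
qed

context
  fixes x :: real
  assumes xpos: "x > 0"
begin

definition CC :: "real \<Rightarrow> real" where "CC s = (Phi (x + s) - Phi (x - s)) / (2 * \<phi> x)"

lemma CC_deriv: "(CC has_real_derivative exp (-(s^2)/2) * cosh (x * s)) (at s)"
proof -
  have "(CC has_real_derivative (\<phi> (x + s) + \<phi> (x - s)) / (2 * \<phi> x)) (at s)"
    unfolding CC_def[abs_def] using phi_pos[of x] by (auto intro!: derivative_eq_intros simp: field_simps)
  then show ?thesis using phi_sum[of x s] phi_pos[of x] by simp
qed

lemma CC0: "CC 0 = 0" by (simp add: CC_def)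

definition EE :: "real \<Rightarrow> real" where
  "EE s = cosh (x * s) * WW s - CC s - exp (-(s^2)/2) * (s * cosh (x * s) - sinh (x * s) / x)"

lemma EE_pos: "s > 0 \<Longrightarrow> EE s > 0"
proof -
  assume s: "s > 0"
  have d: "(EE has_real_derivative
      (x * sinh (x * s) * (WW s - s * exp (-(s^2)/2)) + s * exp (-(s^2)/2) * ((x * s) * cosh (x * s) - sinh (x * s)) / x)) (at s)" for s
    unfolding EE_def[abs_def] using xpos
    by (auto intro!: derivative_eq_intros WW_deriv CC_deriv simp: field_simps power2_eq_square)
  have p: "x * sinh (x * s) * (WW s - s * exp (-(s^2)/2)) + s * exp (-(s^2)/2) * ((x * s) * cosh (x * s) - sinh (x * s)) / x > 0"
    if "s > 0" for s
  proof -
    have "x * sinh (x * s) * (WW s - s * exp (-(s^2)/2)) > 0" using F1[OF that] xpos that by simp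
    moreover have "s * exp (-(s^2)/2) * ((x * s) * cosh (x * s) - sinh (x * s)) / x > 0"
      using F2[of "x * s"] xpos that by simp
    ultimately show ?thesis by linarith
  qed
  from incr_from_deriv[OF s d p] show ?thesis by (simp add: EE_def WW0 CC0)
qed

definition QQ :: "real \<Rightarrow> real" where "QQ s = sinh (x * s) * WW s / x - s * CC s"

lemma QQ_pos: "s > 0 \<Longrightarrow> QQ s > 0"
proof -
  assume s: "s > 0"
  have d: "(QQ has_real_derivative EE s) (at s)" for s
    unfolding QQ_def[abs_def] EE_def using xpos
    by (auto intro!: derivative_eq_intros WW_deriv CC_deriv simp: field_simps)
  from incr_from_deriv[OF s d EE_pos] show ?thesis by (simp add: QQ_def WW0 CC0)
qed


end

lemma WW_pos: "c > 0 \<Longrightarrow> WW c > 0"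
  using F1[of c] by (smt (verit) exp_gt_zero mult_pos_pos)

lemma B_key:
  assumes "x > 0" "c > 0"
  shows "\<phi> (x - c) - \<phi> (x + c) > (c * exp (-(c^2)/2) / WW c) * x * gg c x"
proof -
  have q: "sinh (x * c) * WW c / x - c * CC x c > 0" using QQ_pos[OF assms] unfolding QQ_def[OF assms(1)] .
  have g: "gg c x = 2 * \<phi> x * CC x c" using phi_pos[of x] by (simp add: CC_def[OF assms(1)] gg_def)
  have W: "WW c > 0" using WW_pos assms by simp
  from q assms W have "sinh (x * c) * WW c > x * c * CC x c" by (simp add: field_simps)
  then have "2 * \<phi> x * exp (-(c^2)/2) * (sinh (x * c) * WW c) > 2 * \<phi> x * exp (-(c^2)/2) * (x * c * CC x c)"
    using phi_pos[of x] by simp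
  then show ?thesis unfolding phi_diff g using W by (simp add: field_simps)
qed

lemma P2_mono:
  assumes "c > 0" "0 \<le> a" "a < b"
  defines "\<beta> \<equiv> c * exp (-(c^2)/2) / WW c"
  shows "gg c b * exp (\<beta> * b^2/2) < gg c a * exp (\<beta> * a^2/2)"
proof -
  have d: "((\<lambda>t. - (gg c t * exp (\<beta> * t^2/2))) has_real_derivative
     (exp (\<beta> * t^2/2) * ((\<phi> (t - c) - \<phi> (t + c)) - \<beta> * t * gg c t))) (at t)" for t
    by (auto intro!: derivative_eq_intros simp: algebra_simps)
  have "- (gg c a * exp (\<beta> * a^2/2)) < - (gg c b * exp (\<beta> * b^2/2))"
    by (rule incr_from_deriv[OF assms(3) d]) (use B_key assms in \<open>auto simp: \<beta>_def\<close>)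
  then show ?thesis by simp
qed




lemma cosh_bound: "t \<ge> 0 \<Longrightarrow> cosh t \<ge> 1 + t^2/(2::real)"
proof -
  assume t: "t \<ge> 0"
  have d: "((\<lambda>t. cosh t - 1 - t^2/2) has_real_derivative (sinh t - t)) (at t)" for t :: real
    by (auto intro!: derivative_eq_intros)
  have "sinh t - t \<ge> 0" if "0 < t" for t :: real
    using real_le_x_sinh[of t] that by (simp add: sinh_field_def exp_minus)
  from nondecr_from_deriv[OF t d this] show ?thesis by simp
qed

lemma CC_lower:
  assumes y: "y > 0" and c: "c > 0"
  shows "CC y c \<ge> WW c + (y^2/2) * (WW c - c * exp (-(c^2)/2))"
proof -
  have d: "((\<lambda>s. CC y s - WW s - (y^2/2) * (WW s - s * exp (-(s^2)/2))) has_real_derivative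
      (exp (-(s^2)/2) * (cosh (y * s) - 1 - (y * s)^2/2))) (at s)" for s
    by (auto intro!: derivative_eq_intros CC_deriv[OF y] WW_deriv simp: power2_eq_square algebra_simps) (simp add: field_simps)
  have "exp (-(s^2)/2) * (cosh (y * s) - 1 - (y * s)^2/2) \<ge> 0" if "0 < s" for s
    using cosh_bound[of "y * s"] that y by simp
  from nondecr_from_deriv[of 0 c, OF _ d this] c show ?thesis by (simp add: CC0[OF y] WW0)
qed

lemma gg0: "gg c 0 = 2 * \<phi> 0 * WW c"
  using Phi_sym[of c] by (simp add: gg_def WW_def phi_eq algebra_simps)

lemma ggy: "y > 0 \<Longrightarrow> gg c y = 2 * \<phi> y * CC y c"
  using phi_pos[of y] by (simp add: CC_def gg_def)

lemma gg_upper: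
  assumes c: "c > 0" and y: "y \<ge> c"
  shows "gg c y \<le> 2 * c * \<phi> (y - c)"
proof -
  obtain z where z: "y - c < z" "z < y + c" "Phi (y + c) - Phi (y - c) = ((y + c) - (y - c)) * \<phi> z"
    using MVT2[of "y - c" "y + c" Phi "\<lambda>t. \<phi> t"] c Phi_deriv by auto
  have "(y - c)^2 \<le> z^2" using z y by (intro power_mono) auto
  then have "\<phi> z \<le> \<phi> (y - c)" by (simp add: phi_eq divide_right_mono)
  then show ?thesis using z c by (simp add: gg_def)
qed




lemma opt_a:
  assumes a: "a < 1" and c: "c > 0"
  shows "\<exists>y>0. gg c y / gg c 0 \<le> exp (-a * y^2/2)"
proof -
  define m where "m = gg c 0 * sqrt (2 * pi) / (2 * c)"
  have m: "m > 0" using gg_pos[OF c] c by (simp add: m_def)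
  define d where "d = 1 - a"
  have d: "d > 0" using a by (simp add: d_def)
  define L where "L = \<bar>ln m\<bar>"
  define y where "y = 4 * c/d + 4 * L/d + c + 1"
  have L: "L \<ge> 0" by (simp add: L_def)
  have y1: "y \<ge> 1" "y \<ge> c" "y \<ge> 4 * c/d" "y \<ge> 4 * L/d"
    using c d L by (auto simp: y_def)
  have "c * y \<le> d * y^2/4"
  proof -
    have "4 * c \<le> d * y" using y1(3) d by (simp add: field_simps)
    then have "4 * c*y \<le> d * y*y" using y1 c by (intro mult_right_mono) auto
    then show ?thesis by (simp add: power2_eq_square)
  qed
  moreover have "L \<le> d * y^2/4"
  proof -
    have "4 * L \<le> d * y" using y1(4) d by (simp add: field_simps)
    moreover have "d * y \<le> d * y*y" using y1 d by simp
    ultimately show ?thesis by (simp add: power2_eq_square)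
  qed
  moreover have "(y-c)^2 = y^2 - 2*(c * y) + c^2" by (simp add: power2_eq_square algebra_simps)
  moreover have "a * y^2 = y^2 - d * y^2" by (simp add: d_def algebra_simps)
  moreover have "c^2 \<ge> 0" by simp
  ultimately have e: "-((y-c)^2)/2 + a * y^2/2 \<le> -L"
    by linarith
  have "exp (-((y-c)^2)/2 + a * y^2/2) \<le> exp (-L)" using e by simp
  also have "\<dots> \<le> exp (ln m)" unfolding L_def by simp
  also have "\<dots> = m" using m by simp
  finally have "exp (-((y-c)^2)/2) * exp (a * y^2/2) \<le> m" by (simp add: exp_add[symmetric])
  then have "exp (-((y-c)^2)/2) \<le> m * exp (-a * y^2/2)"
    by (simp add: exp_minus field_simps)
  then have "(2 * c / sqrt (2*pi)) * exp (-((y-c)^2)/2) \<le> (2 * c / sqrt (2*pi)) * (m * exp (-a * y^2/2))"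
    using c by (intro mult_left_mono) auto
  also have "(2 * c / sqrt (2*pi)) * (m * exp (-a * y^2/2)) = gg c 0 * exp (-a * y^2/2)"
    using c by (simp add: m_def)
  finally have "2 * c * \<phi> (y - c) \<le> gg c 0 * exp (-a * y^2/2)"
    by (simp add: phi_eq)
  with gg_upper[OF c y1(2)] have "gg c y \<le> gg c 0 * exp (-a * y^2/2)" by linarith
  then have "gg c y / gg c 0 \<le> exp (-a * y^2/2)" using gg_pos[OF c] by (simp add: field_simps)
  then show ?thesis using y1 by (intro exI[of _ y]) auto
qed

lemma exists_t:
  fixes d e :: real
  assumes "d < e"
  shows "\<exists>t>0. exp (d * t) \<le> 1 + e * t"
proof -
  have "((\<lambda>t. exp (d * t)) has_real_derivative d) (at 0)"
    by (auto intro!: derivative_eq_intros)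
  then have "((\<lambda>t. (exp (d * t) - exp (d * 0)) / (t - 0)) \<longlongrightarrow> d) (at 0)"
    by (simp add: has_field_derivative_iff)
  from order_tendstoD(2)[OF this assms] obtain \<delta> where \<delta>: "\<delta> > 0"
    "\<And>t. t \<noteq> 0 \<Longrightarrow> dist t 0 < \<delta> \<Longrightarrow> (exp (d * t) - 1) / t < e"
    unfolding eventually_at by auto
  have "(exp (d*(\<delta>/2)) - 1) / (\<delta>/2) < e" using \<delta> by (intro \<delta>(2)) auto
  then have "exp (d*(\<delta>/2)) \<le> 1 + e*(\<delta>/2)" using \<delta> by (simp add: field_simps)
  then show ?thesis using \<delta> by (intro exI[of _ "\<delta>/2"]) auto
qed

lemma opt_b:
  assumes c: "c > 0"
  defines "\<beta> \<equiv> c * exp (-(c^2)/2) / WW c"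
  assumes b: "b > \<beta>"
  shows "\<exists>y>0. gg c y / gg c 0 \<ge> exp (-b * y^2/2)"
proof -
  obtain t where t: "t > 0" "exp ((1-b)*t) \<le> 1 + (1-\<beta>)*t" using exists_t[of "1-b" "1-\<beta>"] b by auto
  define y where "y = sqrt (2 * t)"
  have y: "y > 0" "y^2 = 2 * t" using t by (auto simp: y_def)
  have W: "WW c > 0" using WW_pos[OF c] .
  have py: "\<phi> y = \<phi> 0 * exp (-t)" using y(2) by (simp add: phi_eq)
  have q: "gg c y / gg c 0 = exp (-t) * (CC y c / WW c)"
    unfolding ggy[OF y(1), of c] gg0[of c] py using W phi_pos[of 0] by simp
  have "CC y c / WW c \<ge> 1 + t * (1 - \<beta>)"
  proof -
    have H: "CC y c \<ge> WW c + t * (WW c - c * exp (-(c^2)/2))" using CC_lower[OF y(1) c] y by simp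
    have eq: "1 + t * (1 - \<beta>) = (WW c + t * (WW c - c * exp (-(c^2)/2))) / WW c"
      using W by (simp add: \<beta>_def field_simps)
    show ?thesis unfolding eq using H W by (simp add: divide_right_mono)
  qed
  then have "exp (-t) * (1 + t * (1-\<beta>)) \<le> exp (-t) * (CC y c / WW c)" by (intro mult_left_mono) auto
  then have "gg c y / gg c 0 \<ge> exp (-t) * (1 + t * (1-\<beta>))" unfolding q .
  moreover have "exp (-t) * (1 + t * (1-\<beta>)) \<ge> exp (-t) * exp ((1-b)*t)" using t by (simp add: mult.commute)
  moreover have "exp (-t) * exp ((1-b)*t) = exp (-b * y^2/2)" using y
    by (simp add: exp_add[symmetric] algebra_simps)
  ultimately show ?thesis using y by (intro exI[of _ y]) auto
qed




lemma H_bound: "u > 0 \<Longrightarrow> (1 - u/3 + 2 * u^2/45) * exp (u/3 + u^2/90) > (1::real)"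
proof -
  assume u: "u > 0"
  have d: "((\<lambda>u. (1 - u/3 + 2 * u^2/45) * exp (u/3 + u^2/90)) has_real_derivative
     (exp (u/3 + u^2/90) * (u^2/135 + 2 * u^3/2025))) (at u)" for u :: real
    by (auto intro!: derivative_eq_intros simp: field_simps power2_eq_square power3_eq_cube)
  have "exp (u/3 + u^2/90) * (u^2/135 + 2 * u^3/2025) > 0" if "u > 0" for u :: real
    using that by (intro mult_pos_pos add_pos_pos) auto
  from incr_from_deriv[OF u d this] show ?thesis by simp
qed

lemma beta_bound:
  assumes c: "c > 0"
  shows "c * exp (-(c^2)/2) / WW c > exp (-(c^2)/3 - c^4/90)"
proof -
  have d: "((\<lambda>s. s * exp (-(s^2)/6 + s^4/90) - WW s) has_real_derivative
     (exp (-(s^2)/6 + s^4/90) * (1 - s^2/3 + 2 * s^4/45) - exp (-(s^2)/2))) (at s)" for s :: real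
    by (auto intro!: derivative_eq_intros WW_deriv simp: field_simps power2_eq_square power4_eq_xxxx)
  have "exp (-(s^2)/6 + s^4/90) * (1 - s^2/3 + 2 * s^4/45) - exp (-(s^2)/2) > 0" if "s > 0" for s :: real
  proof -
    have h: "(1 - s^2/3 + 2*(s^2)^2/45) * exp (s^2/3 + (s^2)^2/90) > 1" using H_bound[of "s^2"] that by simp
    have e: "exp (-(s^2)/6 + s^4/90) = exp (-(s^2)/2) * exp (s^2/3 + (s^2)^2/90)"
      by (simp add: exp_add[symmetric] power2_eq_square power4_eq_xxxx field_simps)
    have "exp (-(s^2)/2) * ((1 - s^2/3 + 2*(s^2)^2/45) * exp (s^2/3 + (s^2)^2/90)) > exp (-(s^2)/2) * 1"
      using h by simp
    then show ?thesis unfolding e by (simp add: power2_eq_square power4_eq_xxxx algebra_simps)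
  qed
  from incr_from_deriv[OF c d this] have "c * exp (-(c^2)/6 + c^4/90) > WW c" by (simp add: WW0)
  moreover have "exp (-(c^2)/6 + c^4/90) = exp (-(c^2)/2) * exp (c^2/3 + c^4/90)"
    by (simp add: exp_add[symmetric] field_simps)
  ultimately have "WW c < c * exp (-(c^2)/2) * exp (c^2/3 + c^4/90)" by (simp add: mult.assoc)
  then have "WW c * exp (-(c^2)/3 - c^4/90) < c * exp (-(c^2)/2) * exp (c^2/3 + c^4/90) * exp (-(c^2)/3 - c^4/90)"
    by (intro mult_strict_right_mono) auto
  also have "exp (c^2/3 + c^4/90) * exp (-(c^2)/3 - c^4/90) = 1" by (simp add: exp_add[symmetric])
  hence "c * exp (-(c^2)/2) * exp (c^2/3 + c^4/90) * exp (-(c^2)/3 - c^4/90) = c * exp (-(c^2)/2)"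
    by (simp add: mult.assoc)
  finally have "WW c * exp (-(c^2)/3 - c^4/90) < c * exp (-(c^2)/2)" .
  then show ?thesis using WW_pos[OF c] by (simp add: field_simps)
qed

lemma last_bound: "a > 0 \<Longrightarrow> exp (-a - a^2/10) > 1 - (a::real)"
proof -
  assume a: "a > 0"
  have d: "((\<lambda>a. exp (-a - a^2/10) - 1 + a) has_real_derivative
     (1 - (1 + a/5) * exp (-a - a^2/10))) (at a)" for a :: real
    by (auto intro!: derivative_eq_intros simp: field_simps)
  have "1 - (1 + a/5) * exp (-a - a^2/10) > 0" if "a > 0" for a :: real
  proof -
    have "exp (a + a^2/10) \<ge> 1 + (a + a^2/10)" by (rule exp_ge_add_one_self)
    then have "exp (a + a^2/10) > 1 + a/5" using that zero_le_power2[of a] by linarith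
    then have "(1 + a/5) * exp (-a - a^2/10) < exp (a + a^2/10) * exp (-a - a^2/10)"
      using that by (intro mult_strict_right_mono) auto
    also have "\<dots> = 1" by (simp add: exp_add[symmetric])
    finally show ?thesis by simp
  qed
  from incr_from_deriv[OF a d this] show ?thesis by simp
qed




lemma ratio_left:
  fixes gx gy k x y :: real
  assumes "gx > 0" "gx * exp (k * x^2/2) < gy * exp (k * y^2/2)"
  shows "exp (- k * ((y^2 - x^2)/2)) < gy / gx"
proof -
  have e: "exp (- k * ((y^2 - x^2)/2)) = exp (k * x^2/2) / exp (k * y^2/2)"
    by (simp add: exp_diff[symmetric] algebra_simps diff_divide_distrib)
  show ?thesis unfolding e using assms by (simp add: field_simps)
qed

lemma ratio_right:
  fixes gx gy k x y :: real
  assumes "gx > 0" "gy * exp (k * y^2/2) < gx * exp (k * x^2/2)"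
  shows "gy / gx < exp (- k * ((y^2 - x^2)/2))"
proof -
  have e: "exp (- k * ((y^2 - x^2)/2)) = exp (k * x^2/2) / exp (k * y^2/2)"
    by (simp add: exp_diff[symmetric] algebra_simps diff_divide_distrib)
  show ?thesis unfolding e using assms by (simp add: field_simps)
qed

lemma gg_abs: "gg c \<bar>x\<bar> = gg c x"
  by (cases "x \<ge> 0") (auto simp: gg_even)


theorem lemma3p3:
  fixes h :: real
  assumes "h \<noteq> 0"
  defines "\<beta> \<equiv> (h / 2 * exp (- (h^2) / 8)) / (sqrt (2 * pi) * (Phi (h / 2) - 1 / 2))"
  defines "R \<equiv> (\<lambda>x y. (Phi (y + h / 2) - Phi (y - h / 2)) / (Phi (x + h / 2) - Phi (x - h / 2)))"
  shows "(\<forall>x y::real. \<bar>x\<bar> < \<bar>y\<bar> \<longrightarrow>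
            exp (- 1 * ((y^2 - x^2) / 2)) < R x y \<and> R x y < exp (- \<beta> * ((y^2 - x^2) / 2)))
       \<and> (\<forall>a::real. a < 1 \<longrightarrow> (\<exists>x y::real. \<bar>x\<bar> < \<bar>y\<bar> \<and> \<not> (exp (- a * ((y^2 - x^2) / 2)) < R x y)))
       \<and> (\<forall>b::real. b > \<beta> \<longrightarrow> (\<exists>x y::real. \<bar>x\<bar> < \<bar>y\<bar> \<and> \<not> (R x y < exp (- b * ((y^2 - x^2) / 2)))))
       \<and> \<beta> > exp (- (h^2) / 12 - h^4 / 1440)
       \<and> exp (- (h^2) / 12 - h^4 / 1440) > 1 - h^2 / 12"
  proof -
  define c where "c = \<bar>h\<bar>/2"
  have c: "c > 0" using assms(1) by (simp add: c_def)
  have hc: "h/2 = c \<or> h/2 = -c" by (auto simp: c_def)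
  have hR: "R x y = gg c y / gg c x" for x y
    using hc
  proof
    assume "h/2 = c" then show ?thesis by (simp add: R_def gg_def)
  next
    assume "h/2 = -c"
    then have "R x y = (-(gg c y)) / (-(gg c x))" by (simp add: R_def gg_def)
    then show ?thesis by simp
  qed
  have h2: "h^2 = 4 * c^2" by (simp add: c_def power2_eq_square abs_mult_self_eq)
  have hb: "\<beta> = c * exp (-(c^2)/2) / WW c"
    using hc
  proof
    assume hh: "h/2 = c"
    then have "h = 2*c" by simp
    then show ?thesis by (simp add: \<beta>_def WW_def power2_eq_square)
  next
    assume hh: "h/2 = -c"
    have e1: "h / 2 * exp (- (h^2) / 8) = -(c * exp (-(c^2)/2))"
      using hh h2 by (simp add: power2_eq_square)
    have e2: "sqrt (2 * pi) * (Phi (h / 2) - 1 / 2) = - WW c"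
    proof -
      have pc: "Phi (-c) = 1 - Phi c" using Phi_sym[of c] by simp
      have "Phi (h/2) = Phi (-c)" using hh by simp
      then show ?thesis unfolding WW_def pc by (simp add: right_diff_distrib)
    qed
    show ?thesis unfolding \<beta>_def e1 e2 by simp
  qed
  have p1: "\<forall>x y::real. \<bar>x\<bar> < \<bar>y\<bar> \<longrightarrow>
            exp (- 1 * ((y^2 - x^2) / 2)) < R x y \<and> R x y < exp (- \<beta> * ((y^2 - x^2) / 2))"
  proof (intro allI impI conjI)
    fix x y :: real
    assume xy: "\<bar>x\<bar> < \<bar>y\<bar>"
    have l: "gg c x * exp (1 * x^2/2) < gg c y * exp (1 * y^2/2)"
      using P1_mono[OF c abs_ge_zero xy] by (simp add: gg_abs)
    show "exp (- 1 * ((y^2 - x^2) / 2)) < R x y"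
      unfolding hR by (rule ratio_left[OF gg_pos[OF c] l])
    have r: "gg c y * exp (\<beta> * y^2/2) < gg c x * exp (\<beta> * x^2/2)"
      using P2_mono[OF c abs_ge_zero xy] by (simp add: gg_abs hb)
    show "R x y < exp (- \<beta> * ((y^2 - x^2) / 2))"
      unfolding hR by (rule ratio_right[OF gg_pos[OF c] r])
  qed
  have p2: "\<forall>a::real. a < 1 \<longrightarrow> (\<exists>x y::real. \<bar>x\<bar> < \<bar>y\<bar> \<and> \<not> (exp (- a * ((y^2 - x^2) / 2)) < R x y))"
  proof (intro allI impI)
    fix a :: real assume a: "a < 1"
    obtain y where y: "y > 0" "gg c y / gg c 0 \<le> exp (-a * y^2/2)" using opt_a[OF a c] by auto
    have "\<not> (exp (- a * ((y^2 - 0^2) / 2)) < R 0 y)" using y unfolding hR by simp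
    then show "\<exists>x y::real. \<bar>x\<bar> < \<bar>y\<bar> \<and> \<not> (exp (- a * ((y^2 - x^2) / 2)) < R x y)"
      using y by (intro exI[of _ 0] exI[of _ y]) auto
  qed
  have p3: "\<forall>b::real. b > \<beta> \<longrightarrow> (\<exists>x y::real. \<bar>x\<bar> < \<bar>y\<bar> \<and> \<not> (R x y < exp (- b * ((y^2 - x^2) / 2))))"
  proof (intro allI impI)
    fix b :: real assume b: "b > \<beta>"
    obtain y where y: "y > 0" "gg c y / gg c 0 \<ge> exp (-b * y^2/2)" using opt_b[OF c, of b] b hb by auto
    have "\<not> (R 0 y < exp (- b * ((y^2 - 0^2) / 2)))" using y unfolding hR by simp
    then show "\<exists>x y::real. \<bar>x\<bar> < \<bar>y\<bar> \<and> \<not> (R x y < exp (- b * ((y^2 - x^2) / 2)))"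
      using y by (intro exI[of _ 0] exI[of _ y]) auto
  qed
  have h4: "h^4 = 16 * c^4"
  proof -
    have "h^4 = (h^2)^2" by (simp flip: power_mult)
    also have "\<dots> = 16 * c^4" unfolding h2 by (simp add: power_mult_distrib flip: power_mult)
    finally show ?thesis .
  qed
  have p4: "\<beta> > exp (- (h^2) / 12 - h^4 / 1440)"
    using beta_bound[OF c] unfolding hb h2 h4 by simp
  have p5: "exp (- (h^2) / 12 - h^4 / 1440) > 1 - h^2 / 12"
  proof -
    have "h^4 / 1440 = (h^2/12)^2/10" by (simp add: power2_eq_square power4_eq_xxxx)
    moreover have "h^2/12 > 0" using assms(1) by simp
    ultimately show ?thesis using last_bound[of "h^2/12"] by simp
  qed
  show ?thesis using p1 p2 p3 p4 p5 by blast
qed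

end
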